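(* Let $n\ge1$, fix $\beta\in\partial\mathbb{D}$, and on $\mathbb{D}^{n-1}$ (coordinates $\alpha_0,\dots,\alpha_{n-2}$) use the Poisson bracket described in the context. Let $P_n,Q_n$ be as in the context, $F_n(z)=-Q_n(z)/P_n(z)$ and $f_n(w)=w^{-1}\frac{F_n(w)-1}{F_n(w)+1}$. Then \[ \{P_n(z),F_n(w)\}=-\frac{i}{2}\Bigl[\bigl(P_n(z)F_n(w)+Q_n(z)\bigr)\frac{z+w}{z-w}-P_n(z)-Q_n(z)F_n(w)\Bigr], \] \[ \{Q_n(z),F_n(w)\}=-F_n(w)\,\{P_n(z),F_n(w)\}, \] \[ \{P_n(z),f_n(w)\}=(1-wf_n(w))W_n(z,w),\qquad \{Q_n(z),f_n(w)\}=-(1+wf_n(w))W_n(z,w), \] where \[ W_n(z,w)=-\frac{i}{2}\,\frac{\bigl(P_n(z)+Q_n(z)\bigr)+z\bigl(P_n(z)-Q_n(z)\bigr)f_n(w)}{z-w}. \]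
   Context: Let $\rho_j=(1-|\alpha_j|^2)^{1/2}$; the Poisson bracket is $\{f,g\}=\sum_{j=0}^{n-2}i\rho_j^2\bigl(\frac{\partial f}{\partial\bar\alpha_j}\frac{\partial g}{\partial\alpha_j}-\frac{\partial f}{\partial\alpha_j}\frac{\partial g}{\partial\bar\alpha_j}\bigr)$ (Wirtinger derivatives), i.e. $\{\alpha_j,\alpha_k\}=0$, $\{\alpha_j,\bar\alpha_k\}=-i\rho_j^2\delta_{jk}$; $z,w$ are held fixed. The monic OPUC satisfy $\Phi_0=1$, $\Phi_{k+1}(z)=z\Phi_k(z)-\bar\alpha_k\Phi_k^*(z)$ with $\Phi_k^*(z)=z^k\overline{\Phi_k(1/\bar z)}$; $\Psi_k$ satisfies the same recursion with $\alpha_j$ replaced by $-\alpha_j$; $P_n(z)=z\Phi_{n-1}(z)-\bar\beta\Phi_{n-1}^*(z)$, $Q_n(z)=z\Psi_{n-1}(z)+\bar\beta\Psi_{n-1}^*(z)$. The identities hold wherever the denominators are nonzero. *)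

theory Defs
  imports "HOL-Analysis.Analysis" "HOL-Computational_Algebra.Polynomial"
begin

text \<open>Verblunsky coefficients are given as a sequence alpha :: nat => complex;
only alpha 0, ..., alpha (n-2) matter.\<close>

text \<open>Reversed polynomial p^*(z) = z^k conj(p(1/conj z)), for p of degree at most k,
written as a polynomial (so that it is also defined at z = 0).\<close>
definition opuc_star :: "nat \<Rightarrow> complex poly \<Rightarrow> complex poly" where
  "opuc_star k p = (\<Sum>j\<le>k. monom (cnj (coeff p (k - j))) j)"

fun Phi :: "(nat \<Rightarrow> complex) \<Rightarrow> nat \<Rightarrow> complex poly" where
  "Phi \<alpha> 0 = 1"
| "Phi \<alpha> (Suc k) = [:0, 1:] * Phi \<alpha> k - smult (cnj (\<alpha> k)) (opuc_star k (Phi \<alpha> k))"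

definition Psi :: "(nat \<Rightarrow> complex) \<Rightarrow> nat \<Rightarrow> complex poly" where
  "Psi \<alpha> k = Phi (\<lambda>j. - \<alpha> j) k"

definition Pn :: "complex \<Rightarrow> nat \<Rightarrow> (nat \<Rightarrow> complex) \<Rightarrow> complex \<Rightarrow> complex" where
  "Pn \<beta> n \<alpha> z = z * poly (Phi \<alpha> (n - 1)) z
      - cnj \<beta> * poly (opuc_star (n - 1) (Phi \<alpha> (n - 1))) z"

definition Qn :: "complex \<Rightarrow> nat \<Rightarrow> (nat \<Rightarrow> complex) \<Rightarrow> complex \<Rightarrow> complex" where
  "Qn \<beta> n \<alpha> z = z * poly (Psi \<alpha> (n - 1)) z
      + cnj \<beta> * poly (opuc_star (n - 1) (Psi \<alpha> (n - 1))) z"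

definition Fn :: "complex \<Rightarrow> nat \<Rightarrow> (nat \<Rightarrow> complex) \<Rightarrow> complex \<Rightarrow> complex" where
  "Fn \<beta> n \<alpha> w = - Qn \<beta> n \<alpha> w / Pn \<beta> n \<alpha> w"

definition fn_small :: "complex \<Rightarrow> nat \<Rightarrow> (nat \<Rightarrow> complex) \<Rightarrow> complex \<Rightarrow> complex" where
  "fn_small \<beta> n \<alpha> w = (1 / w) * ((Fn \<beta> n \<alpha> w - 1) / (Fn \<beta> n \<alpha> w + 1))"

definition Wn :: "complex \<Rightarrow> nat \<Rightarrow> (nat \<Rightarrow> complex) \<Rightarrow> complex \<Rightarrow> complex \<Rightarrow> complex" where
  "Wn \<beta> n \<alpha> z w = - (\<i> / 2) *
     (((Pn \<beta> n \<alpha> z + Qn \<beta> n \<alpha> z) + z * (Pn \<beta> n \<alpha> z - Qn \<beta> n \<alpha> z) * fn_small \<beta> n \<alpha> w)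
      / (z - w))"

definition dRe :: "((nat \<Rightarrow> complex) \<Rightarrow> complex) \<Rightarrow> nat \<Rightarrow> (nat \<Rightarrow> complex) \<Rightarrow> complex" where
  "dRe f j \<alpha> = vector_derivative (\<lambda>t::real. f (\<alpha>(j := \<alpha> j + of_real t))) (at 0)"

definition dIm :: "((nat \<Rightarrow> complex) \<Rightarrow> complex) \<Rightarrow> nat \<Rightarrow> (nat \<Rightarrow> complex) \<Rightarrow> complex" where
  "dIm f j \<alpha> = vector_derivative (\<lambda>t::real. f (\<alpha>(j := \<alpha> j + \<i> * of_real t))) (at 0)"

definition wirt :: "((nat \<Rightarrow> complex) \<Rightarrow> complex) \<Rightarrow> nat \<Rightarrow> (nat \<Rightarrow> complex) \<Rightarrow> complex" where
  "wirt f j \<alpha> = (dRe f j \<alpha> - \<i> * dIm f j \<alpha>) / 2"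

definition wirt_bar :: "((nat \<Rightarrow> complex) \<Rightarrow> complex) \<Rightarrow> nat \<Rightarrow> (nat \<Rightarrow> complex) \<Rightarrow> complex" where
  "wirt_bar f j \<alpha> = (dRe f j \<alpha> + \<i> * dIm f j \<alpha>) / 2"

definition pbracket :: "nat \<Rightarrow> ((nat \<Rightarrow> complex) \<Rightarrow> complex) \<Rightarrow> ((nat \<Rightarrow> complex) \<Rightarrow> complex)
    \<Rightarrow> (nat \<Rightarrow> complex) \<Rightarrow> complex" where
  "pbracket n f g \<alpha> = (\<Sum>j<n - 1. \<i> * of_real (1 - (cmod (\<alpha> j))\<^sup>2) *
       (wirt_bar f j \<alpha> * wirt g j \<alpha> - wirt f j \<alpha> * wirt_bar g j \<alpha>))"

end

theory Submission
  imports Defs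
begin

definition wd :: "((nat \<Rightarrow> complex) \<Rightarrow> complex) \<Rightarrow> nat \<Rightarrow> (nat \<Rightarrow> complex) \<Rightarrow> complex \<Rightarrow> complex \<Rightarrow> bool" where
 "wd f j a D Db \<longleftrightarrow> ((\<lambda>t::real. f (a(j := a j + of_real t))) has_vector_derivative (D + Db)) (at 0)
    \<and> ((\<lambda>t::real. f (a(j := a j + \<i> * of_real t))) has_vector_derivative (\<i>*D - \<i>*Db)) (at 0)"

lemma wd_dRe_dIm: assumes "wd f j a D Db" shows "dRe f j a = D + Db" "dIm f j a = \<i>*D - \<i>*Db"
  using assms unfolding wd_def dRe_def dIm_def by (auto intro: vector_derivative_at)

lemma i_aux: "\<i> * (\<i> * D - \<i> * Db) = Db - D"
  by (simp add: right_diff_distrib mult.assoc[symmetric])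

lemma wd_wirt: "wd f j a D Db \<Longrightarrow> wirt f j a = D"
  unfolding wirt_def by (simp add: wd_dRe_dIm i_aux)

lemma wd_wirt_bar: "wd f j a D Db \<Longrightarrow> wirt_bar f j a = Db"
  unfolding wirt_bar_def by (simp add: wd_dRe_dIm i_aux)

lemma wdI: "((\<lambda>t::real. f (a(j := a j + of_real t))) has_vector_derivative (D + Db)) (at 0) \<Longrightarrow>
   ((\<lambda>t::real. f (a(j := a j + \<i> * of_real t))) has_vector_derivative (\<i>*D - \<i>*Db)) (at 0) \<Longrightarrow> wd f j a D Db"
  unfolding wd_def by blast

lemma wdD1: "wd f j a D Db \<Longrightarrow> ((\<lambda>t::real. f (a(j := a j + of_real t))) has_vector_derivative (D + Db)) (at 0)"
  unfolding wd_def by blast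

lemma wdD2: "wd f j a D Db \<Longrightarrow> ((\<lambda>t::real. f (a(j := a j + \<i> * of_real t))) has_vector_derivative (\<i>*D - \<i>*Db)) (at 0)"
  unfolding wd_def by blast

lemma wd_const: "wd (\<lambda>b. c) j a 0 0"
  by (rule wdI) simp_all

lemma wd_add: assumes "wd f j a D1 Db1" "wd g j a D2 Db2" shows "wd (\<lambda>b. f b + g b) j a (D1 + D2) (Db1 + Db2)"
proof -
  have x1: "D1 + D2 + (Db1 + Db2) = D1 + Db1 + (D2 + Db2)" by simp
  have x2: "\<i> * (D1 + D2) - \<i> * (Db1 + Db2) = \<i> * D1 - \<i> * Db1 + (\<i> * D2 - \<i> * Db2)" by (simp add: algebra_simps)
  show ?thesis
    apply (rule wdI)
     apply (subst x1)
     apply (rule has_vector_derivative_add[OF wdD1[OF assms(1)] wdD1[OF assms(2)]])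
    apply (subst x2)
    apply (rule has_vector_derivative_add[OF wdD2[OF assms(1)] wdD2[OF assms(2)]])
    done
qed

lemma wd_minus: assumes "wd f j a D1 Db1" shows "wd (\<lambda>b. - f b) j a (- D1) (- Db1)"
proof -
  have x1: "- D1 + - Db1 = - (D1 + Db1)" by simp
  have x2: "\<i> * (- D1) - \<i> * (- Db1) = - (\<i> * D1 - \<i> * Db1)" by simp
  show ?thesis
    apply (rule wdI)
     apply (subst x1)
     apply (rule has_vector_derivative_minus[OF wdD1[OF assms(1)]])
    apply (subst x2)
    apply (rule has_vector_derivative_minus[OF wdD2[OF assms(1)]])
    done
qed

lemma wd_diff: assumes "wd f j a D1 Db1" "wd g j a D2 Db2" shows "wd (\<lambda>b. f b - g b) j a (D1 - D2) (Db1 - Db2)"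
  using wd_add[OF assms(1) wd_minus[OF assms(2)]] by simp

lemma wd_mult: assumes "wd f j a D1 Db1" "wd g j a D2 Db2" shows
   "wd (\<lambda>b. f b * g b) j a (f a * D2 + D1 * g a) (f a * Db2 + Db1 * g a)"
proof -
  from assms have f1: "((\<lambda>t::real. f (a(j := a j + of_real t))) has_vector_derivative (D1 + Db1)) (at 0)"
    and f2: "((\<lambda>t::real. f (a(j := a j + \<i> * of_real t))) has_vector_derivative (\<i>*D1 - \<i>*Db1)) (at 0)"
    and g1: "((\<lambda>t::real. g (a(j := a j + of_real t))) has_vector_derivative (D2 + Db2)) (at 0)"
    and g2: "((\<lambda>t::real. g (a(j := a j + \<i> * of_real t))) has_vector_derivative (\<i>*D2 - \<i>*Db2)) (at 0)"
    unfolding wd_def by auto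
  have e: "a(j := a j + of_real 0) = a" "a(j := a j + \<i> * of_real 0) = a" by auto
  note m1 = has_vector_derivative_mult[OF f1 g1, unfolded e]
  note m2 = has_vector_derivative_mult[OF f2 g2, unfolded e]
  have x1: "f a * (D2 + Db2) + (D1 + Db1) * g a = (f a * D2 + D1 * g a) + (f a * Db2 + Db1 * g a)"
    by (simp add: algebra_simps)
  have x2: "f a * (\<i>*D2 - \<i>*Db2) + (\<i>*D1 - \<i>*Db1) * g a = \<i> * (f a * D2 + D1 * g a) - \<i> * (f a * Db2 + Db1 * g a)"
    by (simp add: algebra_simps)
  show ?thesis unfolding wd_def using m1 m2 unfolding x1 x2 by auto
qed

lemma wd_cmult: "wd f j a D1 Db1 \<Longrightarrow> wd (\<lambda>b. c * f b) j a (c * D1) (c * Db1)"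
  using wd_mult[OF wd_const, of f j a D1 Db1 c] by simp

lemma wd_coord: "wd (\<lambda>b. b i) j a (if i = j then 1 else 0) 0"
proof (cases "i = j")
  case True
  have 1: "((\<lambda>t::real. a j + of_real t) has_vector_derivative 1) (at 0)"
    using has_vector_derivative_add[OF has_vector_derivative_const has_vector_derivative_of_real[OF DERIV_ident]] by simp
  have 2: "((\<lambda>t::real. a j + \<i> * of_real t) has_vector_derivative \<i>) (at 0)"
    using has_vector_derivative_add[OF has_vector_derivative_const has_vector_derivative_mult_right[OF has_vector_derivative_of_real[OF DERIV_ident]]] by simp
  show ?thesis unfolding wd_def using True 1 2 by simp
next
  case False then show ?thesis unfolding wd_def by simp
qed

lemma wd_cnj_coord: "wd (\<lambda>b. cnj (b i)) j a 0 (if i = j then 1 else 0)"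
proof (cases "i = j")
  case True
  have 1: "((\<lambda>t::real. cnj (a j) + of_real t) has_vector_derivative 1) (at 0)"
    using has_vector_derivative_add[OF has_vector_derivative_const has_vector_derivative_of_real[OF DERIV_ident]] by simp
  have 2: "((\<lambda>t::real. cnj (a j) - \<i> * of_real t) has_vector_derivative - \<i>) (at 0)"
    using has_vector_derivative_diff[OF has_vector_derivative_const has_vector_derivative_mult_right[OF has_vector_derivative_of_real[OF DERIV_ident]]] by simp
  have e1: "(\<lambda>t::real. cnj ((a(j := a j + of_real t)) i)) = (\<lambda>t::real. cnj (a j) + of_real t)"
    using True by auto
  have e2: "(\<lambda>t::real. cnj ((a(j := a j + \<i> * of_real t)) i)) = (\<lambda>t::real. cnj (a j) - \<i> * of_real t)"
    using True by auto
  show ?thesis unfolding wd_def e1 e2 using True 1 2 by simp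
next
  case False then show ?thesis unfolding wd_def by simp
qed

lemma wd_inverse: assumes "wd f j a D Db" "f a \<noteq> 0"
  shows "wd (\<lambda>b. inverse (f b)) j a (- D / (f a)^2) (- Db / (f a)^2)"
proof -
  from assms have f1: "((\<lambda>t::real. f (a(j := a j + of_real t))) has_vector_derivative (D + Db)) (at 0)"
    and f2: "((\<lambda>t::real. f (a(j := a j + \<i> * of_real t))) has_vector_derivative (\<i>*D - \<i>*Db)) (at 0)"
    unfolding wd_def by auto
  have e: "a(j := a j + of_real 0) = a" "a(j := a j + \<i> * of_real 0) = a" by auto
  have dg: "(inverse has_field_derivative - inverse ((f a)^2)) (at (f a))"
    using assms(2) by (auto intro!: derivative_eq_intros simp: power2_eq_square)
  have m1: "((inverse \<circ> (\<lambda>t::real. f (a(j := a j + of_real t)))) has_vector_derivative ((D + Db) * - inverse ((f a)^2))) (at 0)"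
    by (rule field_vector_diff_chain_at[OF f1]) (simp add: e dg)
  have m2: "((inverse \<circ> (\<lambda>t::real. f (a(j := a j + \<i> * of_real t)))) has_vector_derivative ((\<i>*D - \<i>*Db) * - inverse ((f a)^2))) (at 0)"
    by (rule field_vector_diff_chain_at[OF f2]) (simp add: e dg)
  have x1: "(D + Db) * - inverse ((f a)^2) = - D / (f a)^2 + - Db / (f a)^2"
    by (simp add: divide_inverse algebra_simps)
  have x2: "(\<i>*D - \<i>*Db) * - inverse ((f a)^2) = \<i> * (- D / (f a)^2) - \<i> * (- Db / (f a)^2)"
    by (simp add: divide_inverse algebra_simps)
  show ?thesis unfolding wd_def using m1 m2 unfolding x1 x2 o_def by auto
qed

lemma coeff_opuc_star: "coeff (opuc_star k p) i = (if i \<le> k then cnj (coeff p (k - i)) else 0)"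
  unfolding opuc_star_def by (simp add: coeff_sum coeff_monom)

lemma degree_opuc_star: "degree (opuc_star k p) \<le> k"
  by (rule degree_le) (simp add: coeff_opuc_star)

lemma x_mult: "[:0, 1:] * (p::complex poly) = pCons 0 p"
  by simp

lemma degree_Phi: "degree (Phi a k) \<le> k"
proof (induction k)
  case 0 then show ?case by simp
next
  case (Suc k)
  have "degree ([:0, 1:] * Phi a k) \<le> Suc k"
    unfolding x_mult using Suc by (simp add: degree_pCons_eq_if)
  moreover have "degree (smult (cnj (a k)) (opuc_star k (Phi a k))) \<le> Suc k"
    using degree_opuc_star[of k "Phi a k"] by (meson degree_smult_le le_SucI order_trans)
  ultimately show ?case by (simp add: degree_diff_le)
qed

lemma star_rec: "opuc_star (Suc k) (Phi a (Suc k)) = opuc_star k (Phi a k) - smult (a k) (pCons 0 (Phi a k))"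
proof (rule poly_eqI)
  fix i :: nat
  let ?p = "Phi a k"
  have dp: "degree ?p \<le> k" by (rule degree_Phi)
  show "coeff (opuc_star (Suc k) (Phi a (Suc k))) i = coeff (opuc_star k ?p - smult (a k) (pCons 0 ?p)) i"
  proof (cases "i = 0")
    case True then show ?thesis by (simp add: coeff_opuc_star x_mult)
  next
    case False
    then obtain m where m: "i = Suc m" by (cases i) auto
    show ?thesis
    proof (cases "m < k")
      case True
      then have e: "k - m = Suc (k - Suc m)" by simp
      show ?thesis using m True by (simp add: coeff_opuc_star x_mult e)
    next
      case False
      then show ?thesis using m dp by (auto simp: coeff_opuc_star x_mult coeff_eq_0)
    qed
  qed
qed


fun T :: "nat \<Rightarrow> (nat \<Rightarrow> complex) \<Rightarrow> complex \<Rightarrow> nat \<Rightarrow> nat \<Rightarrow> complex" where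
  "T 0 a x p q = (if p = q then 1 else 0)"
| "T (Suc k) a x p q = (if p = 0 then x * T k a x 0 q - cnj (a k) * T k a x 1 q
                        else T k a x 1 q - a k * x * T k a x 0 q)"

lemma T_Phi:
  "poly (Phi a k) x = T k a x 0 0 + T k a x 0 1 \<and>
   poly (opuc_star k (Phi a k)) x = T k a x 1 0 + T k a x 1 1 \<and>
   poly (Phi (\<lambda>j. - a j) k) x = T k a x 0 0 - T k a x 0 1 \<and>
   poly (opuc_star k (Phi (\<lambda>j. - a j) k)) x = T k a x 1 1 - T k a x 1 0"
proof (induction k)
  case 0
  have "opuc_star 0 1 = 1" unfolding opuc_star_def by (simp add: one_pCons)
  then show ?case by simp
next
  case (Suc k)
  have s1: "poly (opuc_star (Suc k) (Phi a (Suc k))) x = poly (opuc_star k (Phi a k)) x - a k * x * poly (Phi a k) x"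
    unfolding star_rec by simp
  have s2: "poly (opuc_star (Suc k) (Phi (\<lambda>j. - a j) (Suc k))) x = poly (opuc_star k (Phi (\<lambda>j. - a j) k)) x + a k * x * poly (Phi (\<lambda>j. - a j) k) x"
    unfolding star_rec by simp
  from Suc.IH have h1: "poly (Phi a k) x = T k a x 0 0 + T k a x 0 1"
    and h2: "poly (opuc_star k (Phi a k)) x = T k a x 1 0 + T k a x 1 1"
    and h3: "poly (Phi (\<lambda>j. - a j) k) x = T k a x 0 0 - T k a x 0 1"
    and h4: "poly (opuc_star k (Phi (\<lambda>j. - a j) k)) x = T k a x 1 1 - T k a x 1 0" by blast+
  show ?case unfolding s1 s2 by (simp add: h1 h2 h3 h4 algebra_simps)
qed

definition R0 :: "complex \<Rightarrow> complex \<Rightarrow> nat \<Rightarrow> nat \<Rightarrow> nat \<Rightarrow> nat \<Rightarrow> complex" where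
"R0 z w p s q t = (if p = 0 \<and> s = 1 \<and> q = 0 \<and> t = 1 then - w
   else if p = 0 \<and> s = 1 \<and> q = 1 \<and> t = 0 then w
   else if p = 1 \<and> s = 0 \<and> q = 0 \<and> t = 1 then z
   else if p = 1 \<and> s = 0 \<and> q = 1 \<and> t = 0 then - z else 0)"

definition RG0 :: "complex \<Rightarrow> complex \<Rightarrow> (nat \<Rightarrow> nat \<Rightarrow> complex) \<Rightarrow> (nat \<Rightarrow> nat \<Rightarrow> complex) \<Rightarrow> nat \<Rightarrow> nat \<Rightarrow> nat \<Rightarrow> nat \<Rightarrow> complex" where
"RG0 z w X Y p q s t = (\<Sum>q'<2. \<Sum>t'<2. X p q' * Y s t' * R0 z w q' t' q t)
   - (\<Sum>p'<2. \<Sum>s'<2. R0 z w p s p' s' * X p' q * Y s' t)"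

definition cA :: "complex \<Rightarrow> complex \<Rightarrow> nat \<Rightarrow> nat \<Rightarrow> complex" where
"cA al x p p' = (if p = 0 then (if p' = 0 then x else - cnj al) else (if p' = 0 then - al * x else 1))"

lemma step_alg0:
  fixes z w al :: complex and X Y :: "nat \<Rightarrow> nat \<Rightarrow> complex"
  assumes c: "p = 0 \<or> p = 1" "q = 0 \<or> q = 1" "s = 0 \<or> s = 1" "t = 0 \<or> t = 1"
  shows "RG0 z w (\<lambda>p q. \<Sum>p'<2. cA al z p p' * X p' q) (\<lambda>s t. \<Sum>s'<2. cA al w s s' * Y s' t) p q s t =
     (\<Sum>p'<2. \<Sum>s'<2. cA al z p p' * cA al w s s' * RG0 z w X Y p' q s' t)
     + (z - w) * (1 - al * cnj al) *
       ((if p = 0 then - X 1 q else 0) * (if s = 0 then 0 else - w * Y 0 t)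
        - (if p = 0 then 0 else - z * X 0 q) * (if s = 0 then - Y 1 t else 0))"
  using c by (auto simp: RG0_def R0_def cA_def numeral_2_eq_2 lessThan_Suc algebra_simps)

lemma wd_eq: "wd f j a D Db \<Longrightarrow> D = D' \<Longrightarrow> Db = Db' \<Longrightarrow> wd f j a D' Db'"
  by simp

lemma T_indep: "k \<le> j \<Longrightarrow> T k (a(j := c)) x p q = T k a x p q"
  by (induction k arbitrary: p q) auto

lemma wd_T_indep: assumes "k \<le> j" shows "wd (\<lambda>b. T k b x p q) j a 0 0"
proof -
  have e: "\<And>c. T k (a(j := c)) x p q = T k a x p q" using T_indep assms by blast
  show ?thesis by (rule wdI) (simp_all add: e)
qed

lemma T_Suc_fun0: "(\<lambda>b. T (Suc k) b x 0 q) = (\<lambda>b. x * T k b x 0 q - cnj (b k) * T k b x 1 q)"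
  by simp

lemma T_Suc_fun1: "p \<noteq> 0 \<Longrightarrow> (\<lambda>b. T (Suc k) b x p q) = (\<lambda>b. T k b x 1 q - b k * x * T k b x 0 q)"
  by simp

lemma wd_T_Suc0: assumes "wd (\<lambda>b. T k b x 0 q) j a D0 Db0" "wd (\<lambda>b. T k b x 1 q) j a D1 Db1"
  shows "wd (\<lambda>b. T (Suc k) b x 0 q) j a (x * D0 - cnj (a k) * D1)
           (x * Db0 - cnj (a k) * Db1 - (if k = j then T k a x 1 q else 0))"
  unfolding T_Suc_fun0
  by (rule wd_eq[OF wd_diff[OF wd_cmult[OF assms(1)] wd_mult[OF wd_cnj_coord[of k j a] assms(2)]]]) auto

lemma wd_T_Suc1: assumes "wd (\<lambda>b. T k b x 0 q) j a D0 Db0" "wd (\<lambda>b. T k b x 1 q) j a D1 Db1" "p \<noteq> 0"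
  shows "wd (\<lambda>b. T (Suc k) b x p q) j a (D1 - a k * x * D0 - (if k = j then x * T k a x 0 q else 0))
           (Db1 - a k * x * Db0)"
  unfolding T_Suc_fun1[OF assms(3)]
  by (rule wd_eq[OF wd_diff[OF assms(2) wd_mult[OF wd_mult[OF wd_coord[of k j a] wd_const[of x]] assms(1)]]]) auto

lemma wd_T_ex: "\<exists>D Db. wd (\<lambda>b. T k b x p q) j a D Db"
proof (induction k arbitrary: p q)
  case 0
  have "(\<lambda>b. T 0 b x p q) = (\<lambda>b. (if p = q then 1 else 0))" by simp
  then show ?case using wd_const by metis
next
  case (Suc k)
  obtain D0 Db0 where h0: "wd (\<lambda>b. T k b x 0 q) j a D0 Db0" using Suc.IH by blast
  obtain D1 Db1 where h1: "wd (\<lambda>b. T k b x 1 q) j a D1 Db1" using Suc.IH by blast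
  show ?case
  proof (cases "p = 0")
    case True then show ?thesis using wd_T_Suc0[OF h0 h1] by blast
  next
    case False then show ?thesis using wd_T_Suc1[OF h0 h1 False] by blast
  qed
qed

lemma wd_T: "wd (\<lambda>b. T k b x p q) j a (wirt (\<lambda>b. T k b x p q) j a) (wirt_bar (\<lambda>b. T k b x p q) j a)"
proof -
  obtain D Db where h: "wd (\<lambda>b. T k b x p q) j a D Db" using wd_T_ex by blast
  show ?thesis using h wd_wirt[OF h] wd_wirt_bar[OF h] by simp
qed

lemma wirt_T_Suc: "wirt (\<lambda>b. T (Suc k) b x p q) j a =
  (if p = 0 then x * wirt (\<lambda>b. T k b x 0 q) j a - cnj (a k) * wirt (\<lambda>b. T k b x 1 q) j a
   else wirt (\<lambda>b. T k b x 1 q) j a - a k * x * wirt (\<lambda>b. T k b x 0 q) j a - (if k = j then x * T k a x 0 q else 0))"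
  using wd_wirt[OF wd_T_Suc0[OF wd_T wd_T]] wd_wirt[OF wd_T_Suc1[OF wd_T wd_T]] by auto

lemma wirt_bar_T_Suc: "wirt_bar (\<lambda>b. T (Suc k) b x p q) j a =
  (if p = 0 then x * wirt_bar (\<lambda>b. T k b x 0 q) j a - cnj (a k) * wirt_bar (\<lambda>b. T k b x 1 q) j a - (if k = j then T k a x 1 q else 0)
   else wirt_bar (\<lambda>b. T k b x 1 q) j a - a k * x * wirt_bar (\<lambda>b. T k b x 0 q) j a)"
  using wd_wirt_bar[OF wd_T_Suc0[OF wd_T wd_T]] wd_wirt_bar[OF wd_T_Suc1[OF wd_T wd_T]] by auto

lemma wirt_T_ge: "k \<le> j \<Longrightarrow> wirt (\<lambda>b. T k b x p q) j a = 0"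
  by (rule wd_wirt[OF wd_T_indep])

lemma wirt_bar_T_ge: "k \<le> j \<Longrightarrow> wirt_bar (\<lambda>b. T k b x p q) j a = 0"
  by (rule wd_wirt_bar[OF wd_T_indep])

definition pbk :: "nat \<Rightarrow> ((nat \<Rightarrow> complex) \<Rightarrow> complex) \<Rightarrow> ((nat \<Rightarrow> complex) \<Rightarrow> complex) \<Rightarrow> (nat \<Rightarrow> complex) \<Rightarrow> complex" where
  "pbk k f g a = (\<Sum>j<k. \<i> * of_real (1 - (cmod (a j))\<^sup>2) *
       (wirt_bar f j a * wirt g j a - wirt f j a * wirt_bar g j a))"

lemma pbracket_pbk: "pbracket n f g a = pbk (n - 1) f g a"
  unfolding pbracket_def pbk_def by simp

lemma pbk_Suc: "pbk (Suc k) f g a = pbk k f g a + \<i> * (1 - a k * cnj (a k)) *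
       (wirt_bar f k a * wirt g k a - wirt f k a * wirt_bar g k a)"
proof -
  have e: "(complex_of_real (cmod (a k)))\<^sup>2 = a k * cnj (a k)"
    using complex_norm_square[of "a k"] by simp
  show ?thesis unfolding pbk_def by (simp add: e)
qed

lemma pbk_bilin:
  fixes c d :: "nat \<Rightarrow> complex" and Fs Gs :: "nat \<Rightarrow> (nat \<Rightarrow> complex) \<Rightarrow> complex"
  assumes f1: "\<And>j. j < k \<Longrightarrow> wirt F j a = (\<Sum>p'<2. c p' * wirt (Fs p') j a)"
    and f2: "\<And>j. j < k \<Longrightarrow> wirt_bar F j a = (\<Sum>p'<2. c p' * wirt_bar (Fs p') j a)"
    and g1: "\<And>j. j < k \<Longrightarrow> wirt G j a = (\<Sum>p'<2. d p' * wirt (Gs p') j a)"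
    and g2: "\<And>j. j < k \<Longrightarrow> wirt_bar G j a = (\<Sum>p'<2. d p' * wirt_bar (Gs p') j a)"
  shows "pbk k F G a = (\<Sum>p'<2. \<Sum>s'<2. c p' * d s' * pbk k (Fs p') (Gs s') a)"
proof -
  let ?t = "\<lambda>j f g. \<i> * of_real (1 - (cmod (a j))\<^sup>2) * (wirt_bar f j a * wirt g j a - wirt f j a * wirt_bar g j a)"
  have "pbk k F G a = (\<Sum>j<k. c 0 * d 0 * ?t j (Fs 0) (Gs 0) + c 0 * d 1 * ?t j (Fs 0) (Gs 1)
       + c 1 * d 0 * ?t j (Fs 1) (Gs 0) + c 1 * d 1 * ?t j (Fs 1) (Gs 1))"
    unfolding pbk_def
    by (rule sum.cong) (simp_all add: f1 f2 g1 g2 numeral_2_eq_2 lessThan_Suc algebra_simps)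
  also have "\<dots> = (\<Sum>p'<2. \<Sum>s'<2. c p' * d s' * pbk k (Fs p') (Gs s') a)"
    unfolding pbk_def by (simp add: numeral_2_eq_2 lessThan_Suc sum.distrib sum_distrib_left)
  finally show ?thesis .
qed

definition RT :: "nat \<Rightarrow> (nat \<Rightarrow> complex) \<Rightarrow> complex \<Rightarrow> complex \<Rightarrow> nat \<Rightarrow> nat \<Rightarrow> nat \<Rightarrow> nat \<Rightarrow> complex" where
  "RT k a z w p q s t = \<i> / (z - w) * RG0 z w (T k a z) (T k a w) p q s t"

lemma T_Suc_cA: "T (Suc k) a x = (\<lambda>p q. \<Sum>p'<2. cA (a k) x p p' * T k a x p' q)"
  by (auto simp: fun_eq_iff cA_def numeral_2_eq_2 lessThan_Suc)

lemma wirt_T_Suc_lt: "j < k \<Longrightarrow> wirt (\<lambda>b. T (Suc k) b x p q) j a = (\<Sum>p'<2. cA (a k) x p p' * wirt (\<lambda>b. T k b x p' q) j a)"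
  using wirt_T_Suc[of k x p q j a] by (simp add: cA_def numeral_2_eq_2 lessThan_Suc del: T.simps)

lemma wirt_bar_T_Suc_lt: "j < k \<Longrightarrow> wirt_bar (\<lambda>b. T (Suc k) b x p q) j a = (\<Sum>p'<2. cA (a k) x p p' * wirt_bar (\<lambda>b. T k b x p' q) j a)"
  using wirt_bar_T_Suc[of k x p q j a] by (simp add: cA_def numeral_2_eq_2 lessThan_Suc del: T.simps)

lemma wirt_T_Suc_eq: "wirt (\<lambda>b. T (Suc k) b x p q) k a = (if p = 0 then 0 else - x * T k a x 0 q)"
  using wirt_T_Suc[of k x p q k a] by (simp add: wirt_T_ge del: T.simps)

lemma wirt_bar_T_Suc_eq: "wirt_bar (\<lambda>b. T (Suc k) b x p q) k a = (if p = 0 then - T k a x 1 q else 0)"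
  using wirt_bar_T_Suc[of k x p q k a] by (simp add: wirt_bar_T_ge del: T.simps)

lemma main_T:
  assumes zw: "z \<noteq> w"
  shows "p < 2 \<Longrightarrow> q < 2 \<Longrightarrow> s < 2 \<Longrightarrow> t < 2 \<Longrightarrow>
    pbk k (\<lambda>b. T k b z p q) (\<lambda>b. T k b w s t) a = RT k a z w p q s t"
proof (induction k arbitrary: p q s t)
  case 0
  then have c: "p = 0 \<or> p = 1" "q = 0 \<or> q = 1" "s = 0 \<or> s = 1" "t = 0 \<or> t = 1" by auto
  show ?case using c by (auto simp: pbk_def RT_def RG0_def R0_def numeral_2_eq_2 lessThan_Suc)
next
  case (Suc k)
  then have c: "p = 0 \<or> p = 1" "q = 0 \<or> q = 1" "s = 0 \<or> s = 1" "t = 0 \<or> t = 1" by auto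
  have b: "pbk k (\<lambda>b. T (Suc k) b z p q) (\<lambda>b. T (Suc k) b w s t) a =
     (\<Sum>p'<2. \<Sum>s'<2. cA (a k) z p p' * cA (a k) w s s' * pbk k (\<lambda>b. T k b z p' q) (\<lambda>b. T k b w s' t) a)"
    by (rule pbk_bilin[where Fs = "\<lambda>p' b. T k b z p' q" and Gs = "\<lambda>s' b. T k b w s' t"])
       (simp_all add: wirt_T_Suc_lt wirt_bar_T_Suc_lt del: T.simps)
  have ih: "(\<Sum>p'<2. \<Sum>s'<2. cA (a k) z p p' * cA (a k) w s s' * pbk k (\<lambda>b. T k b z p' q) (\<lambda>b. T k b w s' t) a)
     = (\<Sum>p'<2. \<Sum>s'<2. cA (a k) z p p' * cA (a k) w s s' * RT k a z w p' q s' t)"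
    using Suc.IH Suc.prems by (intro sum.cong refl) simp_all
  have alg: "RG0 z w (T (Suc k) a z) (T (Suc k) a w) p q s t =
     (\<Sum>p'<2. \<Sum>s'<2. cA (a k) z p p' * cA (a k) w s s' * RG0 z w (T k a z) (T k a w) p' q s' t)
     + (z - w) * (1 - a k * cnj (a k)) *
       ((if p = 0 then - T k a z 1 q else 0) * (if s = 0 then 0 else - w * T k a w 0 t)
        - (if p = 0 then 0 else - z * T k a z 0 q) * (if s = 0 then - T k a w 1 t else 0))"
    unfolding T_Suc_cA by (rule step_alg0[OF c])
  have zw': "z - w \<noteq> 0" using zw by simp
  have fin: "\<And>S r E. \<i> / (z - w) * (S + (z - w) * r * E) = \<i> / (z - w) * S + \<i> * r * E"
    using zw' by (simp add: field_simps)
  have sumf: "(\<Sum>p'<2. \<Sum>s'<2. cA (a k) z p p' * cA (a k) w s s' * (\<i> / (z - w) * RG0 z w (T k a z) (T k a w) p' q s' t))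
     = \<i> / (z - w) * (\<Sum>p'<2. \<Sum>s'<2. cA (a k) z p p' * cA (a k) w s s' * RG0 z w (T k a z) (T k a w) p' q s' t)"
    by (simp add: sum_distrib_left mult_ac)
  show ?case
    unfolding pbk_Suc b ih RT_def alg wirt_T_Suc_eq wirt_bar_T_Suc_eq fin sumf ..
qed

definition Wf :: "nat \<Rightarrow> complex \<Rightarrow> complex \<Rightarrow> nat \<Rightarrow> (nat \<Rightarrow> complex) \<Rightarrow> complex" where
  "Wf k \<sigma> x p b = T k b x p 0 + \<sigma> * T k b x p 1"

definition Lf :: "nat \<Rightarrow> complex \<Rightarrow> complex \<Rightarrow> complex \<Rightarrow> (nat \<Rightarrow> complex) \<Rightarrow> complex" where
  "Lf k cb \<sigma> x b = x * Wf k \<sigma> x 0 b - cb * Wf k \<sigma> x 1 b"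

definition lc :: "complex \<Rightarrow> complex \<Rightarrow> nat \<Rightarrow> complex" where
  "lc cb x p = (if p = 0 then x else - cb)"

definition sg :: "complex \<Rightarrow> nat \<Rightarrow> complex" where
  "sg \<sigma> q = (if q = 0 then 1 else \<sigma>)"

lemma sum2: "(\<Sum>i<(2::nat). f i) = f 0 + f 1"
  by (simp add: numeral_2_eq_2)

lemma Wf_fun: "Wf k \<sigma> x p = (\<lambda>b. T k b x p 0 + \<sigma> * T k b x p 1)"
  by (rule ext) (simp add: Wf_def)

lemma Lf_fun: "Lf k cb \<sigma> x = (\<lambda>b. x * Wf k \<sigma> x 0 b - cb * Wf k \<sigma> x 1 b)"
  by (rule ext) (simp add: Lf_def)

lemma wd_Wf: "wd (Wf k \<sigma> x p) j a (\<Sum>q<2. sg \<sigma> q * wirt (\<lambda>b. T k b x p q) j a)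
                                    (\<Sum>q<2. sg \<sigma> q * wirt_bar (\<lambda>b. T k b x p q) j a)"
  unfolding Wf_fun
  by (rule wd_eq[OF wd_add[OF wd_T wd_cmult[OF wd_T]]]) (simp_all add: sg_def numeral_2_eq_2 lessThan_Suc)

lemma wd_Wf': "wd (Wf k \<sigma> x p) j a (wirt (Wf k \<sigma> x p) j a) (wirt_bar (Wf k \<sigma> x p) j a)"
proof -
  note h = wd_Wf[of k \<sigma> x p j a]
  show ?thesis unfolding wd_wirt[OF h] wd_wirt_bar[OF h] by (rule h)
qed

lemma wd_Lf: "wd (Lf k cb \<sigma> x) j a (\<Sum>p<2. lc cb x p * wirt (Wf k \<sigma> x p) j a)
                                    (\<Sum>p<2. lc cb x p * wirt_bar (Wf k \<sigma> x p) j a)"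
  unfolding Lf_fun
  by (rule wd_eq[OF wd_diff[OF wd_cmult[OF wd_Wf'] wd_cmult[OF wd_Wf']]]) (simp_all add: lc_def numeral_2_eq_2 lessThan_Suc)

lemma wd_Lf': "wd (Lf k cb \<sigma> x) j a (wirt (Lf k cb \<sigma> x) j a) (wirt_bar (Lf k cb \<sigma> x) j a)"
proof -
  note h = wd_Lf[of k cb \<sigma> x j a]
  show ?thesis unfolding wd_wirt[OF h] wd_wirt_bar[OF h] by (rule h)
qed

lemma pbk_Lf:
  assumes zw: "z \<noteq> w"
  shows "pbk k (Lf k cb \<sigma> z) (Lf k cb \<tau> w) a =
    (\<Sum>p<2. \<Sum>s<2. lc cb z p * lc cb w s * (\<Sum>q<2. \<Sum>t<2. sg \<sigma> q * sg \<tau> t * RT k a z w p q s t))"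
proof -
  have "pbk k (Lf k cb \<sigma> z) (Lf k cb \<tau> w) a =
      (\<Sum>p<2. \<Sum>s<2. lc cb z p * lc cb w s * pbk k (Wf k \<sigma> z p) (Wf k \<tau> w s) a)"
    by (rule pbk_bilin) (simp_all add: wd_wirt[OF wd_Lf] wd_wirt_bar[OF wd_Lf])
  also have "\<dots> = (\<Sum>p<2. \<Sum>s<2. lc cb z p * lc cb w s * (\<Sum>q<2. \<Sum>t<2. sg \<sigma> q * sg \<tau> t * RT k a z w p q s t))"
  proof (intro sum.cong refl)
    fix p s assume ps: "p \<in> {..<2::nat}" "s \<in> {..<2::nat}"
    have "pbk k (Wf k \<sigma> z p) (Wf k \<tau> w s) a =
       (\<Sum>q<2. \<Sum>t<2. sg \<sigma> q * sg \<tau> t * pbk k (\<lambda>b. T k b z p q) (\<lambda>b. T k b w s t) a)"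
      by (rule pbk_bilin) (simp_all add: wd_wirt[OF wd_Wf] wd_wirt_bar[OF wd_Wf])
    also have "\<dots> = (\<Sum>q<2. \<Sum>t<2. sg \<sigma> q * sg \<tau> t * RT k a z w p q s t)"
      using ps by (intro sum.cong refl) (simp add: main_T[OF zw])
    finally show "lc cb z p * lc cb w s * pbk k (Wf k \<sigma> z p) (Wf k \<tau> w s) a =
       lc cb z p * lc cb w s * (\<Sum>q<2. \<Sum>t<2. sg \<sigma> q * sg \<tau> t * RT k a z w p q s t)" by simp
  qed
  finally show ?thesis .
qed

lemma alg2:
  fixes X Y :: "nat \<Rightarrow> nat \<Rightarrow> complex"
  shows "(\<Sum>p<2. \<Sum>s<2. lc cb z p * lc cb w s * (\<Sum>q<2. \<Sum>t<2. sg \<sigma> q * sg \<tau> t * RG0 z w X Y p q s t))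
   = (\<sigma> - \<tau>) * (w * (z * X 0 0 - cb * X 1 0) * (w * Y 0 1 - cb * Y 1 1)
                 - z * (z * X 0 1 - cb * X 1 1) * (w * Y 0 0 - cb * Y 1 0))"
  unfolding RG0_def sum2
  apply (simp add: R0_def lc_def sg_def)
  apply algebra
  done


lemma pbk_Lf2:
  assumes zw: "z \<noteq> w"
  shows "pbk k (Lf k cb \<sigma> z) (Lf k cb \<tau> w) a = \<i> / (z - w) * ((\<sigma> - \<tau>) *
      (w * (z * T k a z 0 0 - cb * T k a z 1 0) * (w * T k a w 0 1 - cb * T k a w 1 1)
     - z * (z * T k a z 0 1 - cb * T k a z 1 1) * (w * T k a w 0 0 - cb * T k a w 1 0)))"
proof -
  have "pbk k (Lf k cb \<sigma> z) (Lf k cb \<tau> w) a = \<i> / (z - w) *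
    (\<Sum>p<2. \<Sum>s<2. lc cb z p * lc cb w s * (\<Sum>q<2. \<Sum>t<2. sg \<sigma> q * sg \<tau> t * RG0 z w (T k a z) (T k a w) p q s t))"
    unfolding pbk_Lf[OF zw] RT_def sum2 by algebra
  then show ?thesis unfolding alg2 .
qed

lemma fin1:
  fixes Pz Qz Pw Qw z w :: complex
  assumes "Pw \<noteq> 0" "z \<noteq> w"
  defines "B \<equiv> \<i> / (z - w) * ((w * (Pz + Qz) * (Pw - Qw) - z * (Pz - Qz) * (Pw + Qw)) / 2)"
  shows "- inverse Pw * B = - (\<i> / 2) * ((Pz * (- Qw / Pw) + Qz) * ((z + w) / (z - w)) - Pz - Qz * (- Qw / Pw))"
proof -
  have zw: "z - w \<noteq> 0" using assms by simp
  have h1: "Pw * inverse Pw = 1" "(z - w) * inverse (z - w) = 1" using assms(1) zw by auto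
  show ?thesis using h1 unfolding B_def divide_inverse by algebra
qed

lemma fin3:
  fixes Pz Qz Pw Qw z w :: complex
  assumes "Pw \<noteq> 0" "z \<noteq> w" "w \<noteq> 0" "- Qw / Pw + 1 \<noteq> 0"
  defines "B \<equiv> \<i> / (z - w) * ((w * (Pz + Qz) * (Pw - Qw) - z * (Pz - Qz) * (Pw + Qw)) / 2)"
  defines "F \<equiv> - Qw / Pw"
  defines "f \<equiv> 1 / w * ((F - 1) / (F + 1))"
  shows "2 / (w * (F + 1)^2) * (- inverse Pw * B) =
     (1 - w * f) * (- (\<i> / 2) * (((Pz + Qz) + z * (Pz - Qz) * f) / (z - w)))"
    and "2 / (w * (F + 1)^2) * (Qw / Pw^2 * (- B)) =
     - (1 + w * f) * (- (\<i> / 2) * (((Pz + Qz) + z * (Pz - Qz) * f) / (z - w)))"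
proof -
  have zw: "z - w \<noteq> 0" using assms by simp
  have pq: "Pw - Qw \<noteq> 0" using assms(1,4) by (simp add: field_simps)
  have F1: "F + 1 = (Pw - Qw) / Pw" unfolding F_def using assms(1) by (simp add: field_simps)
  have fe: "f = - (Pw + Qw) / (w * (Pw - Qw))" unfolding f_def F1 unfolding F_def using assms(1,3) pq
    by (simp add: field_simps)
  have h1: "Pw * inverse Pw = 1" "(z - w) * inverse (z - w) = 1" "w * inverse w = 1"
    "(Pw - Qw) * inverse (Pw - Qw) = 1" "2 * inverse (2::complex) = 1" using assms(1,3) zw pq by auto
  have e1: "2 / (w * ((Pw - Qw) / Pw)^2) = 2 * inverse w * Pw * Pw * inverse (Pw - Qw) * inverse (Pw - Qw)"
    by (simp add: field_simps power2_eq_square)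
  have e2: "- (Pw + Qw) / (w * (Pw - Qw)) = - (Pw + Qw) * inverse w * inverse (Pw - Qw)"
    by (simp add: field_simps)
  show "2 / (w * (F + 1)^2) * (- inverse Pw * B) =
     (1 - w * f) * (- (\<i> / 2) * (((Pz + Qz) + z * (Pz - Qz) * f) / (z - w)))"
    unfolding fe F1 e1 e2 B_def using h1 unfolding divide_inverse power2_eq_square by algebra
  show "2 / (w * (F + 1)^2) * (Qw / Pw^2 * (- B)) =
     - (1 + w * f) * (- (\<i> / 2) * (((Pz + Qz) + z * (Pz - Qz) * f) / (z - w)))"
    unfolding fe F1 e1 e2 B_def using h1 unfolding divide_inverse power2_eq_square inverse_mult_distrib by algebra
qed

lemma T_Phi1: "poly (Phi a k) x = T k a x 0 0 + T k a x 0 1" using T_Phi by blast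
lemma T_Phi2: "poly (opuc_star k (Phi a k)) x = T k a x 1 0 + T k a x 1 1" using T_Phi by blast
lemma T_Phi3: "poly (Phi (\<lambda>j. - a j) k) x = T k a x 0 0 - T k a x 0 1" using T_Phi by blast
lemma T_Phi4: "poly (opuc_star k (Phi (\<lambda>j. - a j) k)) x = T k a x 1 1 - T k a x 1 0" using T_Phi by blast

lemma pbk_right:
  assumes "\<And>j. j < k \<Longrightarrow> wirt G j a = d * wirt G0 j a" "\<And>j. j < k \<Longrightarrow> wirt_bar G j a = d * wirt_bar G0 j a"
  shows "pbk k F G a = d * pbk k F G0 a"
  unfolding pbk_def sum_distrib_left by (rule sum.cong) (simp_all add: assms algebra_simps)

lemma pbk_right2:
  assumes "\<And>j. j < k \<Longrightarrow> wirt G j a = d0 * wirt G0 j a + d1 * wirt G1 j a"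
    "\<And>j. j < k \<Longrightarrow> wirt_bar G j a = d0 * wirt_bar G0 j a + d1 * wirt_bar G1 j a"
  shows "pbk k F G a = d0 * pbk k F G0 a + d1 * pbk k F G1 a"
  unfolding pbk_def sum_distrib_left sum.distrib[symmetric] by (rule sum.cong) (simp_all add: assms algebra_simps)

lemma wd_quot: assumes "wd P j a DP DbP" "wd Q j a DQ DbQ" "P a \<noteq> 0"
  shows "wd (\<lambda>b. - (Q b * inverse (P b))) j a (- inverse (P a) * DQ + Q a / (P a)^2 * DP)
     (- inverse (P a) * DbQ + Q a / (P a)^2 * DbP)"
  by (rule wd_eq[OF wd_minus[OF wd_mult[OF assms(2) wd_inverse[OF assms(1,3)]]]])
     (simp_all add: divide_inverse algebra_simps)

lemma fs_alg: assumes "F + 1 \<noteq> 0" "w \<noteq> 0"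
  shows "1 / w * ((F - 1) * (- (D + 0) / (F + 1)^2) + (D - 0) * inverse (F + 1)) = 2 / (w * (F + 1)^2) * (D::complex)"
proof -
  have h: "(F + 1) * inverse (F + 1) = 1" "w * inverse w = 1" using assms by auto
  show ?thesis using h unfolding divide_inverse power2_eq_square inverse_mult_distrib by algebra
qed

lemma wd_fsmall: assumes "wd F j a D Db" "F a + 1 \<noteq> 0" "w \<noteq> 0"
  shows "wd (\<lambda>b. 1 / w * ((F b - 1) * inverse (F b + 1))) j a (2 / (w * (F a + 1)^2) * D) (2 / (w * (F a + 1)^2) * Db)"
  by (rule wd_eq[OF wd_cmult[OF wd_mult[OF wd_diff[OF assms(1) wd_const] wd_inverse[OF wd_add[OF assms(1) wd_const] assms(2)]]]])
     (rule fs_alg[OF assms(2,3)])+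

lemma wd_self: "wd f j a D Db \<Longrightarrow> wd f j a (wirt f j a) (wirt_bar f j a)"
  by (simp add: wd_wirt wd_wirt_bar)

theorem theorem13p2:
  fixes n :: nat and \<beta> z w :: complex and \<alpha> :: "nat \<Rightarrow> complex"
  assumes "n \<ge> 1"
    and "cmod \<beta> = 1"
    and "\<forall>j < n - 1. cmod (\<alpha> j) < 1"
  shows "(Pn \<beta> n \<alpha> w \<noteq> 0 \<and> z \<noteq> w \<longrightarrow>
           pbracket n (\<lambda>a. Pn \<beta> n a z) (\<lambda>a. Fn \<beta> n a w) \<alpha> =
             - (\<i> / 2) * ((Pn \<beta> n \<alpha> z * Fn \<beta> n \<alpha> w + Qn \<beta> n \<alpha> z) * ((z + w) / (z - w))
                          - Pn \<beta> n \<alpha> z - Qn \<beta> n \<alpha> z * Fn \<beta> n \<alpha> w)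
         \<and> pbracket n (\<lambda>a. Qn \<beta> n a z) (\<lambda>a. Fn \<beta> n a w) \<alpha> =
             - Fn \<beta> n \<alpha> w * pbracket n (\<lambda>a. Pn \<beta> n a z) (\<lambda>a. Fn \<beta> n a w) \<alpha>)
       \<and> (Pn \<beta> n \<alpha> w \<noteq> 0 \<and> z \<noteq> w \<and> w \<noteq> 0 \<and> Fn \<beta> n \<alpha> w + 1 \<noteq> 0 \<longrightarrow>
           pbracket n (\<lambda>a. Pn \<beta> n a z) (\<lambda>a. fn_small \<beta> n a w) \<alpha> =
             (1 - w * fn_small \<beta> n \<alpha> w) * Wn \<beta> n \<alpha> z w
         \<and> pbracket n (\<lambda>a. Qn \<beta> n a z) (\<lambda>a. fn_small \<beta> n a w) \<alpha> =
             - (1 + w * fn_small \<beta> n \<alpha> w) * Wn \<beta> n \<alpha> z w)"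
proof -
  define k where "k = n - 1"
  define cb where "cb = cnj \<beta>"
  have Pfun: "\<And>x. (\<lambda>b. Pn \<beta> n b x) = Lf k cb 1 x"
    by (rule ext) (simp add: Pn_def Lf_def Wf_def T_Phi1 T_Phi2 k_def cb_def algebra_simps)
  have Qfun: "\<And>x. (\<lambda>b. Qn \<beta> n b x) = Lf k cb (-1) x"
    by (rule ext) (simp add: Qn_def Psi_def Lf_def Wf_def T_Phi3 T_Phi4 k_def cb_def algebra_simps)
  have Pv: "\<And>x. Pn \<beta> n \<alpha> x = Lf k cb 1 x \<alpha>" using Pfun by metis
  have Qv: "\<And>x. Qn \<beta> n \<alpha> x = Lf k cb (-1) x \<alpha>" using Qfun by metis
  have pb: "\<And>f g. pbracket n f g \<alpha> = pbk k f g \<alpha>" by (simp add: pbracket_pbk k_def)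
  define Pz Qz Pw Qw where "Pz = Pn \<beta> n \<alpha> z" and "Qz = Qn \<beta> n \<alpha> z" and "Pw = Pn \<beta> n \<alpha> w" and "Qw = Qn \<beta> n \<alpha> w"
  have AB: "\<And>\<sigma> x. Lf k cb \<sigma> x \<alpha> = (x * T k \<alpha> x 0 0 - cb * T k \<alpha> x 1 0) + \<sigma> * (x * T k \<alpha> x 0 1 - cb * T k \<alpha> x 1 1)"
    by (simp add: Lf_def Wf_def algebra_simps)
  have two_inv: "2 * inverse (2::complex) = 1" by simp
  define B where "B = \<i> / (z - w) * ((w * (Pz + Qz) * (Pw - Qw) - z * (Pz - Qz) * (Pw + Qw)) / 2)"
  define Az Bz Aw Bw where "Az = z * T k \<alpha> z 0 0 - cb * T k \<alpha> z 1 0" and "Bz = z * T k \<alpha> z 0 1 - cb * T k \<alpha> z 1 1"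
    and "Aw = w * T k \<alpha> w 0 0 - cb * T k \<alpha> w 1 0" and "Bw = w * T k \<alpha> w 0 1 - cb * T k \<alpha> w 1 1"
  have PQAB: "Pz = Az + Bz" "Qz = Az - Bz" "Pw = Aw + Bw" "Qw = Aw - Bw"
    unfolding Pz_def Qz_def Pw_def Qw_def Pv Qv AB Az_def Bz_def Aw_def Bw_def by simp_all
  have key: "w * (Pz + Qz) * (Pw - Qw) - z * (Pz - Qz) * (Pw + Qw) = 4 * (w * Az * Bw - z * Bz * Aw)"
    unfolding PQAB by algebra
  have four: "\<And>X::complex. (4 * X) / 2 = 2 * X" by simp
  have BPQ: "pbk k (Lf k cb 1 z) (Lf k cb (-1) w) \<alpha> = B" if zw: "z \<noteq> w"
    unfolding pbk_Lf2[OF zw] B_def key four Az_def[symmetric] Bz_def[symmetric] Aw_def[symmetric] Bw_def[symmetric] by (simp add: divide_inverse algebra_simps)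
  have BQP: "pbk k (Lf k cb (-1) z) (Lf k cb 1 w) \<alpha> = - B" if zw: "z \<noteq> w"
    unfolding pbk_Lf2[OF zw] B_def key four Az_def[symmetric] Bz_def[symmetric] Aw_def[symmetric] Bw_def[symmetric] by (simp add: divide_inverse algebra_simps)
  have BPP: "z \<noteq> w \<Longrightarrow> pbk k (Lf k cb 1 z) (Lf k cb 1 w) \<alpha> = 0"
    unfolding pbk_Lf2 by simp
  have BQQ: "z \<noteq> w \<Longrightarrow> pbk k (Lf k cb (-1) z) (Lf k cb (-1) w) \<alpha> = 0"
    unfolding pbk_Lf2 by simp
  define Ff where "Ff = (\<lambda>b. - (Lf k cb (-1) w b * inverse (Lf k cb 1 w b)))"
  have Ffun: "(\<lambda>a. Fn \<beta> n a w) = Ff"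
    unfolding Ff_def by (rule ext) (simp add: Fn_def divide_inverse Pv Qv Pfun[THEN fun_cong] Qfun[THEN fun_cong])
  have Fv: "Fn \<beta> n \<alpha> w = - Qw / Pw" unfolding Pw_def Qw_def Fn_def by simp
  have wdF: "\<And>j. Pw \<noteq> 0 \<Longrightarrow> wd Ff j \<alpha> (- inverse Pw * wirt (Lf k cb (-1) w) j \<alpha> + Qw / Pw^2 * wirt (Lf k cb 1 w) j \<alpha>)
       (- inverse Pw * wirt_bar (Lf k cb (-1) w) j \<alpha> + Qw / Pw^2 * wirt_bar (Lf k cb 1 w) j \<alpha>)"
    unfolding Ff_def Pw_def Qw_def Pv Qv by (rule wd_quot[OF wd_Lf' wd_Lf'])
  have pbF: "\<And>G. Pw \<noteq> 0 \<Longrightarrow> pbk k G Ff \<alpha> = - inverse Pw * pbk k G (Lf k cb (-1) w) \<alpha> + Qw / Pw^2 * pbk k G (Lf k cb 1 w) \<alpha>"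
    by (rule pbk_right2) (simp_all add: wd_wirt[OF wdF] wd_wirt_bar[OF wdF])
  define ff where "ff = (\<lambda>b. 1 / w * ((Ff b - 1) * inverse (Ff b + 1)))"
  have ffun: "(\<lambda>a. fn_small \<beta> n a w) = ff"
    unfolding ff_def by (rule ext) (simp add: fn_small_def divide_inverse Ffun[THEN fun_cong, symmetric])
  have Ffv: "Ff \<alpha> = - Qw / Pw" using Fv Ffun by metis
  have pbf: "\<And>G. Pw \<noteq> 0 \<Longrightarrow> w \<noteq> 0 \<Longrightarrow> - Qw / Pw + 1 \<noteq> 0 \<Longrightarrow>
      pbk k G ff \<alpha> = 2 / (w * (- Qw / Pw + 1)^2) * pbk k G Ff \<alpha>"
  proof -
    fix G assume h: "Pw \<noteq> 0" "w \<noteq> 0" "- Qw / Pw + 1 \<noteq> 0"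
    have w: "\<And>j. wd ff j \<alpha> (2 / (w * (- Qw / Pw + 1)^2) * wirt Ff j \<alpha>) (2 / (w * (- Qw / Pw + 1)^2) * wirt_bar Ff j \<alpha>)"
      unfolding ff_def Ffv[symmetric] by (rule wd_fsmall[OF wd_self[OF wdF[OF h(1)]]]) (use h Ffv in simp_all)
    show "pbk k G ff \<alpha> = 2 / (w * (- Qw / Pw + 1)^2) * pbk k G Ff \<alpha>"
      by (rule pbk_right) (simp_all add: wd_wirt[OF w] wd_wirt_bar[OF w])
  qed
  have fv: "fn_small \<beta> n \<alpha> w = 1 / w * ((- Qw / Pw - 1) / (- Qw / Pw + 1))"
    unfolding fn_small_def Fv ..
  have Wv: "Wn \<beta> n \<alpha> z w = - (\<i> / 2) * (((Pz + Qz) + z * (Pz - Qz) * fn_small \<beta> n \<alpha> w) / (z - w))"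
    unfolding Wn_def Pz_def Qz_def ..
  show ?thesis
  proof (intro conjI impI)
    assume h: "Pn \<beta> n \<alpha> w \<noteq> 0 \<and> z \<noteq> w"
    then have h1: "Pw \<noteq> 0" "z \<noteq> w" unfolding Pw_def by auto
    have e1: "pbracket n (\<lambda>a. Pn \<beta> n a z) (\<lambda>a. Fn \<beta> n a w) \<alpha> = - inverse Pw * B"
      unfolding pb Pfun Ffun pbF[OF h1(1)] BPQ[OF h1(2)] BPP[OF h1(2)] by simp
    show "pbracket n (\<lambda>a. Pn \<beta> n a z) (\<lambda>a. Fn \<beta> n a w) \<alpha> =
             - (\<i> / 2) * ((Pn \<beta> n \<alpha> z * Fn \<beta> n \<alpha> w + Qn \<beta> n \<alpha> z) * ((z + w) / (z - w))
                          - Pn \<beta> n \<alpha> z - Qn \<beta> n \<alpha> z * Fn \<beta> n \<alpha> w)"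
      unfolding e1 Fv Pz_def[symmetric] Qz_def[symmetric] B_def by (rule fin1[OF h1])
    show "pbracket n (\<lambda>a. Qn \<beta> n a z) (\<lambda>a. Fn \<beta> n a w) \<alpha> =
             - Fn \<beta> n \<alpha> w * pbracket n (\<lambda>a. Pn \<beta> n a z) (\<lambda>a. Fn \<beta> n a w) \<alpha>"
      unfolding e1 unfolding pb Qfun Ffun pbF[OF h1(1)] BQP[OF h1(2)] BQQ[OF h1(2)] Fv
      using h1 by (simp add: field_simps power2_eq_square)
  next
    assume h: "Pn \<beta> n \<alpha> w \<noteq> 0 \<and> z \<noteq> w \<and> w \<noteq> 0 \<and> Fn \<beta> n \<alpha> w + 1 \<noteq> 0"
    then have h1: "Pw \<noteq> 0" "z \<noteq> w" "w \<noteq> 0" "- Qw / Pw + 1 \<noteq> 0" unfolding Pw_def Fv by auto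
    have eP: "pbracket n (\<lambda>a. Pn \<beta> n a z) (\<lambda>a. fn_small \<beta> n a w) \<alpha> = 2 / (w * (- Qw / Pw + 1)^2) * (- inverse Pw * B)"
      unfolding pb Pfun ffun pbf[OF h1(1,3,4)] pbF[OF h1(1)] BPQ[OF h1(2)] BPP[OF h1(2)] by simp
    have eQ: "pbracket n (\<lambda>a. Qn \<beta> n a z) (\<lambda>a. fn_small \<beta> n a w) \<alpha> = 2 / (w * (- Qw / Pw + 1)^2) * (Qw / Pw^2 * (- B))"
      unfolding pb Qfun ffun pbf[OF h1(1,3,4)] pbF[OF h1(1)] BQP[OF h1(2)] BQQ[OF h1(2)] by simp
    show "pbracket n (\<lambda>a. Pn \<beta> n a z) (\<lambda>a. fn_small \<beta> n a w) \<alpha> =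
             (1 - w * fn_small \<beta> n \<alpha> w) * Wn \<beta> n \<alpha> z w"
      unfolding eP Wv fv B_def by (rule fin3(1)[OF h1])
    show "pbracket n (\<lambda>a. Qn \<beta> n a z) (\<lambda>a. fn_small \<beta> n a w) \<alpha> =
             - (1 + w * fn_small \<beta> n \<alpha> w) * Wn \<beta> n \<alpha> z w"
      unfolding eQ Wv fv B_def by (rule fin3(2)[OF h1])
  qed
qed

end
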